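(* For every set $X\subseteq\omega$ there is a family $(A_f)_{f\in 2^\omega}$ of infinite subsets of $\omega$ such that for all distinct $f,g\in 2^\omega$, the sets $A_f$ and $A_g$ are $X$ bi-immune.
   Context: For $X,A,B\subseteq\omega$, $A$ and $B$ are called $X$ bi-immune if for every partial $X$-computable function $h$ with infinite range there is some $a\in A$ with $h(a)$ defined and $h(a)\notin B$, and there is some $b\in B$ with $h(b)$ defined and $h(b)\notin A$. *)

theory Defs
  imports Main "HOL-Library.Nat_Bijection"
begin

text \<open>Partial recursive functions relative to an oracle X, as unary functions on nat
  (tuples coded with prod_encode). Kleene-style term syntax with big-step semantics.\<close>

datatype rf = Zer | Suc_f | Idt | Fst_f | Snd_f | Orc
  | Comp rf rf | Pair_f rf rf | Prec rf rf | Mu rf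

inductive eval_rf :: "nat set \<Rightarrow> rf \<Rightarrow> nat \<Rightarrow> nat \<Rightarrow> bool" for X :: "nat set" where
  zer: "eval_rf X Zer n 0"
| suc: "eval_rf X Suc_f n (Suc n)"
| idt: "eval_rf X Idt n n"
| fst: "eval_rf X Fst_f n (fst (prod_decode n))"
| snd: "eval_rf X Snd_f n (snd (prod_decode n))"
| orc: "eval_rf X Orc n (if n \<in> X then 1 else 0)"
| comp: "eval_rf X g n m \<Longrightarrow> eval_rf X f m k \<Longrightarrow> eval_rf X (Comp f g) n k"
| pair: "eval_rf X f n a \<Longrightarrow> eval_rf X g n b \<Longrightarrow> eval_rf X (Pair_f f g) n (prod_encode (a, b))"
| prec0: "eval_rf X f x y \<Longrightarrow> eval_rf X (Prec f g) (prod_encode (x, 0)) y"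
| precS: "eval_rf X (Prec f g) (prod_encode (x, k)) y \<Longrightarrow>
           eval_rf X g (prod_encode (x, prod_encode (k, y))) z \<Longrightarrow>
           eval_rf X (Prec f g) (prod_encode (x, Suc k)) z"
| mu: "eval_rf X f (prod_encode (n, k)) 0 \<Longrightarrow>
       (\<forall>j<k. \<exists>m. eval_rf X f (prod_encode (n, j)) (Suc m)) \<Longrightarrow>
       eval_rf X (Mu f) n k"

definition partial_comp_in :: "nat set \<Rightarrow> (nat \<Rightarrow> nat option) \<Rightarrow> bool" where
  "partial_comp_in X h \<longleftrightarrow> (\<exists>t. \<forall>n m. h n = Some m \<longleftrightarrow> eval_rf X t n m)"

definition bi_immune :: "nat set \<Rightarrow> nat set \<Rightarrow> nat set \<Rightarrow> bool" where
  "bi_immune X A B \<longleftrightarrow>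
     (\<forall>h. partial_comp_in X h \<and> infinite (ran h) \<longrightarrow>
        (\<exists>a\<in>A. \<exists>v. h a = Some v \<and> v \<notin> B) \<and>
        (\<exists>b\<in>B. \<exists>v. h b = Some v \<and> v \<notin> A))"

end

theory Submission
  imports Defs "HOL-Library.Countable"
begin

instance rf :: countable by countable_datatype

definition T :: "nat \<Rightarrow> rf" where "T n = fst (from_nat n :: rf \<times> nat \<times> bool)"
definition K :: "nat \<Rightarrow> nat" where "K n = fst (snd (from_nat n :: rf \<times> nat \<times> bool))"
definition B :: "nat \<Rightarrow> bool" where "B n = snd (snd (from_nat n :: rf \<times> nat \<times> bool))"

definition C :: "nat set \<Rightarrow> nat \<Rightarrow> bool" where
  "C X n \<longleftrightarrow> (\<exists>h. (\<forall>x m. h x = Some m \<longleftrightarrow> eval_rf X (T n) x m) \<and> infinite (ran h))"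

definition P :: "nat set \<Rightarrow> nat \<Rightarrow> nat set \<Rightarrow> nat \<times> nat" where
  "P X n S = (SOME p. fst p \<notin> S \<and> snd p \<notin> S \<and> (C X n \<longrightarrow> eval_rf X (T n) (fst p) (snd p)))"

primrec U :: "nat set \<Rightarrow> nat \<Rightarrow> nat set" where
  "U X 0 = {}"
| "U X (Suc n) = U X n \<union> {fst (P X n (U X n)), snd (P X n (U X n))}"

definition av :: "nat set \<Rightarrow> nat \<Rightarrow> nat" where "av X n = fst (P X n (U X n))"
definition vv :: "nat set \<Rightarrow> nat \<Rightarrow> nat" where "vv X n = snd (P X n (U X n))"

lemma finU: "finite (U X n)" by (induction n) auto

lemma exP: assumes "finite S"
  shows "\<exists>p. fst p \<notin> S \<and> snd p \<notin> S \<and> (C X n \<longrightarrow> eval_rf X (T n) (fst p) (snd p))"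
proof (cases "C X n")
  case False
  obtain x where "x \<notin> S" using assms infinite_UNIV_nat by (meson ex_new_if_finite)
  then show ?thesis using False by (intro exI[of _ "(x,x)"]) auto
next
  case True
  then obtain h where h: "\<And>x m. h x = Some m \<longleftrightarrow> eval_rf X (T n) x m" and inf: "infinite (ran h)"
    unfolding C_def by blast
  have "finite (S \<union> {v. \<exists>a\<in>S. h a = Some v})"
  proof -
    have "{v. \<exists>a\<in>S. h a = Some v} \<subseteq> the ` h ` S" by force
    then show ?thesis using assms finite_subset by blast
  qed
  have "ran h - (S \<union> {v. \<exists>a\<in>S. h a = Some v}) \<noteq> {}"
  proof
    assume "ran h - (S \<union> {v. \<exists>a\<in>S. h a = Some v}) = {}"
    then have "ran h \<subseteq> S \<union> {v. \<exists>a\<in>S. h a = Some v}" by blast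
    then show False using inf finite_subset \<open>finite (S \<union> {v. \<exists>a\<in>S. h a = Some v})\<close> by blast
  qed
  then obtain v where v: "v \<in> ran h" "v \<notin> S" "\<And>a. a \<in> S \<Longrightarrow> h a \<noteq> Some v" by blast
  then obtain a where a: "h a = Some v" unfolding ran_def by blast
  then have "a \<notin> S" using v by blast
  then show ?thesis using a v h True by (intro exI[of _ "(a,v)"]) auto
qed

lemma Pprop: "av X n \<notin> U X n \<and> vv X n \<notin> U X n \<and> (C X n \<longrightarrow> eval_rf X (T n) (av X n) (vv X n))"
  unfolding av_def vv_def P_def
  using someI_ex[OF exP[OF finU[of X n], of X n]] by simp

lemma Umono: "m \<le> n \<Longrightarrow> U X m \<subseteq> U X n"
  by (induction n rule: dec_induct) auto

lemma inU: "m < n \<Longrightarrow> av X m \<in> U X n \<and> vv X m \<in> U X n"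
  using Umono[of "Suc m" n X] by (auto simp: av_def vv_def)

lemma av_inj: "inj (av X)"
proof (rule injI)
  fix m n assume e: "av X m = av X n"
  show "m = n"
  proof (rule ccontr)
    assume "m \<noteq> n"
    then consider "m < n" | "n < m" by linarith
    then show False
    proof cases
      case 1 then show ?thesis using inU[OF 1, of X] Pprop[of X n] e by simp
    next
      case 2 then show ?thesis using inU[OF 2, of X] Pprop[of X m] e by simp
    qed
  qed
qed

definition AA :: "nat set \<Rightarrow> (nat \<Rightarrow> bool) \<Rightarrow> nat set" where
  "AA X f = {av X n | n. f (K n) = B n}"

lemma idx: "T (to_nat (t,k,b)) = t" "K (to_nat (t,k,b)) = k" "B (to_nat (t,k,b)) = b"
  by (auto simp: T_def K_def B_def)

lemma AA_inf: "infinite (AA X f)"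
proof -
  let ?g = "\<lambda>k. av X (to_nat (Zer, k, f k))"
  have "inj ?g"
  proof (rule injI)
    fix x y assume "?g x = ?g y"
    then have "to_nat (Zer, x, f x) = to_nat (Zer, y, f y)" using av_inj[of X] by (simp add: inj_eq)
    then show "x = y" by simp
  qed
  moreover have "range ?g \<subseteq> AA X f"
  proof
    fix x assume "x \<in> range ?g"
    then obtain k where "x = ?g k" by blast
    moreover have "f (K (to_nat (Zer, k, f k))) = B (to_nat (Zer, k, f k))" by (simp add: idx)
    ultimately show "x \<in> AA X f" unfolding AA_def by blast
  qed
  moreover have "infinite (range ?g)" using \<open>inj ?g\<close> finite_imageD infinite_UNIV_nat by blast
  ultimately show ?thesis using finite_subset by blast
qed

lemma half:
  assumes hc: "partial_comp_in X h" and inf: "infinite (ran h)" and fg: "f \<noteq> g"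
  shows "\<exists>a\<in>AA X f. \<exists>v. h a = Some v \<and> v \<notin> AA X g"
proof -
  obtain t where t: "\<And>n m. h n = Some m \<longleftrightarrow> eval_rf X t n m" using hc partial_comp_in_def by blast
  obtain k where k: "f k \<noteq> g k" using fg by blast
  define n where "n = to_nat (t, k, f k)"
  have Tn: "T n = t" "K n = k" "B n = f k" using idx n_def by auto
  have "C X n" unfolding C_def Tn using t inf by blast
  then have "eval_rf X t (av X n) (vv X n)" using Pprop[of X n] Tn by simp
  then have ev: "h (av X n) = Some (vv X n)" using t by blast
  have ina: "av X n \<in> AA X f" unfolding AA_def using Tn by auto
  have "vv X n \<notin> AA X g"
  proof
    assume "vv X n \<in> AA X g"
    then obtain m where m: "vv X n = av X m" "g (K m) = B m" unfolding AA_def by blast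
    consider "m = n" | "m < n" | "n < m" by linarith
    then show False
    proof cases
      case 1 then show ?thesis using m Tn k by simp
    next
      case 2 then have "av X m \<in> U X n" using inU by blast
      then show ?thesis using Pprop[of X n] m(1) by simp
    next
      case 3 then have "vv X n \<in> U X m" using inU by blast
      then show ?thesis using Pprop[of X m] m(1) by simp
    qed
  qed
  then show ?thesis using ina ev by blast
qed

theorem lemma4p2:
  fixes X :: "nat set"
  shows "\<exists>A :: (nat \<Rightarrow> bool) \<Rightarrow> nat set.
           (\<forall>f. infinite (A f)) \<and>
           (\<forall>f g. f \<noteq> g \<longrightarrow> bi_immune X (A f) (A g))"
proof (intro exI[of _ "AA X"] conjI allI impI)
  fix f show "infinite (AA X f)" by (rule AA_inf)
next
  fix f g :: "nat \<Rightarrow> bool" assume "f \<noteq> g"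
  then show "bi_immune X (AA X f) (AA X g)"
    unfolding bi_immune_def using half[of X _ f g] half[of X _ g f] \<open>f \<noteq> g\<close> by auto
qed

end
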